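(* For every $n\in\mathbb{N}$ and positive integer $m$, the number of divisors of $\{0,1,\ldots,n\}$ of cardinality exactly $m$ equals the number of headstrong compositions of $n+1$ with exactly $m$ parts.
   Context: A set $B\subseteq\mathbb{N}=\{0,1,\ldots\}$ is a divisor of $A$ if $B+C=A$ for some $C\subseteq\mathbb{N}$, where $B+C=\{b+c:b\in B,c\in C\}$. A composition of a positive integer $N$ is an ordered tuple $(c_1,\ldots,c_m)$ of positive integers summing to $N$ ($m$ parts); it is headstrong if $c_1\ge c_i$ for all $i$. *)

theory Defs
  imports Main
begin

definition sumset :: "nat set \<Rightarrow> nat set \<Rightarrow> nat set" where
  "sumset B C = {b + c | b c. b \<in> B \<and> c \<in> C}"

definition is_divisor :: "nat set \<Rightarrow> nat set \<Rightarrow> bool" where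
  "is_divisor B A \<longleftrightarrow> (\<exists>C. sumset B C = A)"

definition is_composition :: "nat \<Rightarrow> nat list \<Rightarrow> bool" where
  "is_composition N cs \<longleftrightarrow> (\<forall>c\<in>set cs. 0 < c) \<and> sum_list cs = N"

definition headstrong :: "nat list \<Rightarrow> bool" where
  "headstrong cs \<longleftrightarrow> cs \<noteq> [] \<and> (\<forall>i<length cs. cs ! i \<le> cs ! 0)"

end

theory Submission
  imports Defs
begin

definition PS :: "nat list \<Rightarrow> nat \<Rightarrow> nat" where
  "PS g j = sum_list (take j g)"

definition FF :: "nat list \<Rightarrow> nat set" where
  "FF cs = PS (tl cs) ` {..<length cs}"

lemma PS_Suc: "j < length g \<Longrightarrow> PS g (Suc j) = PS g j + g ! j"
  unfolding PS_def by (simp add: take_Suc_conv_app_nth)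

lemma PS_0[simp]: "PS g 0 = 0" unfolding PS_def by simp

lemma PS_full: "PS g (length g) = sum_list g" unfolding PS_def by simp

lemma PS_le: "PS g j \<le> sum_list g"
proof -
  have "sum_list g = sum_list (take j g) + sum_list (drop j g)"
    by (metis append_take_drop_id sum_list_append)
  thus ?thesis unfolding PS_def by linarith
qed

lemma PS_mono:
  assumes pos: "\<forall>x\<in>set g. 0 < x" and "i < j" and "j \<le> length g"
  shows "PS g i < PS g j"
  using assms(2,3)
proof (induction j)
  case 0 then show ?case by simp
next
  case (Suc j)
  have "g ! j > 0" using pos Suc.prems by auto
  hence "PS g j < PS g (Suc j)" using PS_Suc Suc.prems by simp
  moreover have "PS g i \<le> PS g j" using Suc by (cases "i = j") auto
  ultimately show ?case by simp
qed

lemma PS_sorted: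
  assumes pos: "\<forall>x\<in>set g. 0 < x" and "k \<le> Suc (length g)"
  shows "sorted_wrt (<) (map (PS g) [0..<k])"
  using assms by (auto simp: sorted_wrt_map sorted_wrt_iff_nth_less intro!: PS_mono)

lemma PS_cover:
  "\<exists>j\<le>N. PS g j \<le> x \<and> (j = N \<or> x < PS g (Suc j))"
proof (induction N)
  case 0 then show ?case by simp
next
  case (Suc N)
  then obtain j where j: "j \<le> N" "PS g j \<le> x" "j = N \<or> x < PS g (Suc j)" by blast
  show ?case
  proof (cases "j = N \<and> PS g (Suc N) \<le> x")
    case True then show ?thesis by (intro exI[of _ "Suc N"]) auto
  next
    case False then show ?thesis using j by (intro exI[of _ j]) auto
  qed
qed



lemma fwd:
  assumes pos: "\<forall>x\<in>set g. 0 < x" and hs: "\<forall>x\<in>set g. x \<le> h" and sm: "h + sum_list g = n + 1" and hp: "0 < h"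
  shows "is_divisor (FF (h # g)) {0..n} \<and> finite (FF (h # g)) \<and> card (FF (h # g)) = Suc (length g)"
proof -
  have FFe: "FF (h # g) = PS g ` {..<Suc (length g)}" unfolding FF_def by simp
  have inj: "inj_on (PS g) {..<Suc (length g)}"
  proof (rule inj_onI)
    fix a b assume a: "a \<in> {..<Suc (length g)}" and b: "b \<in> {..<Suc (length g)}" and e: "PS g a = PS g b"
    show "a = b"
    proof (rule ccontr)
      assume "a \<noteq> b"
      then consider "a < b" | "b < a" by linarith
      then show False using PS_mono[OF pos, of a b] PS_mono[OF pos, of b a] a b e by cases auto
    qed
  qed
  have card: "card (FF (h # g)) = Suc (length g)" using FFe card_image[OF inj] by simp
  have "sumset (FF (h # g)) {0..<h} = {0..n}"
  proof
    show "sumset (FF (h # g)) {0..<h} \<subseteq> {0..n}"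
    proof
      fix y assume "y \<in> sumset (FF (h # g)) {0..<h}"
      then obtain j c where "j < Suc (length g)" "c < h" "y = PS g j + c"
        unfolding sumset_def FFe by auto
      then show "y \<in> {0..n}" using PS_le[of g j] sm by auto
    qed
  next
    show "{0..n} \<subseteq> sumset (FF (h # g)) {0..<h}"
    proof
      fix x assume x: "x \<in> {0..n}"
      obtain j where j: "j \<le> length g" "PS g j \<le> x" "j = length g \<or> x < PS g (Suc j)"
        using PS_cover by blast
      have "x - PS g j < h"
      proof (cases "j = length g")
        case True then show ?thesis using x sm hp PS_full[of g] by simp
      next
        case False
        hence jl: "j < length g" using j by simp
        hence "g ! j \<le> h" using hs by auto
        then show ?thesis using j False PS_Suc[OF jl] by auto
      qed
      moreover have "PS g j \<in> FF (h # g)" using FFe j by auto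
      ultimately show "x \<in> sumset (FF (h # g)) {0..<h}"
        unfolding sumset_def using j(2) by (intro CollectI exI[of _ "PS g j"] exI[of _ "x - PS g j"]) auto
    qed
  qed
  then show ?thesis unfolding is_divisor_def using card FFe by auto
qed


lemma bwd:
  assumes S: "sumset B C = {0..n}" and fin: "finite B" and cB: "card B = m" and m0: "0 < m"
  shows "\<exists>h g. (\<forall>x\<in>set g. 0<x) \<and> (\<forall>x\<in>set g. x \<le> h) \<and> h + sum_list g = n+1 \<and> 0 < h
           \<and> length g = m - 1 \<and> FF (h#g) = B"
proof -
  define L where "L = sorted_list_of_set B"
  have Ls: "sorted_wrt (<) L" unfolding L_def by (simp add: strict_sorted_list_of_set)
  have Lset: "set L = B" unfolding L_def using fin by simp
  have Llen: "length L = m" unfolding L_def using cB by simp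
  have mono: "\<And>i j. i < j \<Longrightarrow> j < m \<Longrightarrow> L ! i < L ! j"
    using Ls Llen by (simp add: sorted_wrt_iff_nth_less)
  have monoe: "\<And>i j. i \<le> j \<Longrightarrow> j < m \<Longrightarrow> L ! i \<le> L ! j"
    using mono by (metis le_eq_less_or_eq order.refl)
  have inS: "\<And>b c. b \<in> B \<Longrightarrow> c \<in> C \<Longrightarrow> b + c \<le> n"
  proof -
    fix b c assume "b \<in> B" "c \<in> C"
    hence "b + c \<in> sumset B C" unfolding sumset_def by blast
    thus "b + c \<le> n" using S by auto
  qed
  have "(0::nat) \<in> sumset B C" using S by auto
  then obtain b0 c0 where b0: "b0 \<in> B" "c0 \<in> C" "0 = b0 + c0" unfolding sumset_def by blast
  have zB: "0 \<in> B" using b0 by simp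
  define K where "K = L ! (m - 1)"
  have KB: "K \<in> B" unfolding K_def using Lset Llen m0 by (metis diff_less nth_mem zero_less_one)
  have Kn: "K \<le> n" using inS[OF KB b0(2)] by simp
  have Kmax: "\<And>j. j < m \<Longrightarrow> L ! j \<le> K" unfolding K_def using monoe by simp
  have Cle: "\<And>c. c \<in> C \<Longrightarrow> c \<le> n - K" using inS[OF KB] by fastforce
  have L0: "L ! 0 = 0"
  proof -
    obtain k where "k < m" "L ! k = 0" using zB Lset Llen by (metis in_set_conv_nth)
    thus ?thesis using monoe[of 0 k] by simp
  qed
  define g where "g = map (\<lambda>i. L ! (Suc i) - L ! i) [0..<m-1]"
  define h where "h = n + 1 - K"
  have glen: "length g = m - 1" unfolding g_def by simp
  have gnth: "\<And>i. i < m - 1 \<Longrightarrow> g ! i = L ! (Suc i) - L ! i" unfolding g_def by simp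
  have PSL: "\<And>j. j < m \<Longrightarrow> PS g j = L ! j"
  proof -
    fix j show "j < m \<Longrightarrow> PS g j = L ! j"
    proof (induction j)
      case 0 then show ?case using L0 by simp
    next
      case (Suc j)
      have "j < length g" using Suc.prems glen by simp
      hence "PS g (Suc j) = PS g j + g ! j" by (rule PS_Suc)
      also have "\<dots> = L ! j + (L ! (Suc j) - L ! j)" using Suc gnth by simp
      also have "\<dots> = L ! Suc j" using monoe[of j "Suc j"] Suc.prems by simp
      finally show ?case .
    qed
  qed
  have FFB: "FF (h # g) = B"
  proof -
    have "FF (h # g) = PS g ` {..<m}" unfolding FF_def using glen m0 by simp
    also have "\<dots> = (\<lambda>j. L ! j) ` {..<m}" using PSL by (intro image_cong) auto
    also have "\<dots> = set L" using Llen by (auto simp: in_set_conv_nth)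
    finally show ?thesis using Lset by simp
  qed
  have pos: "\<forall>x\<in>set g. 0<x"
  proof
    fix x assume "x \<in> set g"
    then obtain i where "i < m - 1" "x = g ! i" using glen by (metis in_set_conv_nth)
    thus "0 < x" using gnth mono[of i "Suc i"] by simp
  qed
  have sumg: "sum_list g = K"
    using PSL[of "m - 1"] PS_full[of g] glen m0 unfolding K_def by simp
  have hs: "\<forall>x\<in>set g. x \<le> h"
  proof
    fix x assume "x \<in> set g"
    then obtain i where i: "i < m - 1" "x = g ! i" using glen by (metis in_set_conv_nth)
    show "x \<le> h"
    proof (rule ccontr)
      assume "\<not> x \<le> h"
      hence big: "L ! Suc i - L ! i > n + 1 - K" using i gnth unfolding h_def by simp
      define y where "y = L ! i + (n - K) + 1"
      have "L ! Suc i \<le> K" using Kmax i by simp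
      hence "y < L ! Suc i" "y \<le> n" using big Kn unfolding y_def by linarith+
      hence "y \<in> sumset B C" using S by simp
      then obtain b c where bc: "b \<in> B" "c \<in> C" "y = b + c" unfolding sumset_def by blast
      obtain k where k: "k < m" "b = L ! k" using bc Lset Llen by (metis in_set_conv_nth)
      have "L ! i < L ! k" using Cle[OF bc(2)] bc(3) k Kn unfolding y_def by linarith
      have "i < m" using i by simp
      hence "i < k" using monoe[of k i] \<open>L ! i < L ! k\<close> by (cases "k \<le> i") auto
      moreover have "L ! k < L ! Suc i" using bc \<open>y < L ! Suc i\<close> k by linarith
      hence "k < Suc i" using monoe[of "Suc i" k] k by (cases "Suc i \<le> k") auto
      ultimately show False by simp
    qed
  qed
  show ?thesis
    by (rule exI[of _ h], rule exI[of _ g]) (use pos hs sumg Kn glen FFB in \<open>auto simp: h_def\<close>)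
qed


lemma hs_iff: "headstrong (h # g) \<longleftrightarrow> (\<forall>x\<in>set g. x \<le> h)"
  unfolding headstrong_def all_set_conv_all_nth
  by (auto simp: less_Suc_eq_0_disj)

lemma FF_set: "FF (h # g) = set (map (PS g) [0..<Suc (length g)])"
proof -
  have "set [0..<Suc (length g)] = {..<Suc (length g)}" by auto
  then show ?thesis unfolding FF_def by (simp only: set_map list.sel length_Cons)
qed

lemma inj_FF:
  assumes pos: "\<forall>x\<in>set g. 0 < x" and pos': "\<forall>x\<in>set g'. 0 < x"
    and sm: "h + sum_list g = N" and sm': "h' + sum_list g' = N"
    and len: "length g = length g'" and e: "FF (h # g) = FF (h' # g')"
  shows "h # g = h' # g'"
proof -
  have "map (PS g) [0..<Suc (length g)] = map (PS g') [0..<Suc (length g')]"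
    using strict_sorted_equal[OF PS_sorted[OF pos order.refl] PS_sorted[OF pos' order.refl]]
      e FF_set by metis
  hence eqP: "\<And>j. j \<le> length g \<Longrightarrow> PS g j = PS g' j" using len
    by (metis (no_types, lifting) add_0 diff_zero less_Suc_eq_le nth_map_upt)
  have "g = g'"
  proof (rule nth_equalityI)
    show "length g = length g'" by (rule len)
    fix i assume i: "i < length g"
    have "g ! i = PS g (Suc i) - PS g i" using PS_Suc[OF i] by simp
    also have "\<dots> = PS g' (Suc i) - PS g' i" using eqP i by simp
    also have "\<dots> = g' ! i" using PS_Suc[of i g'] i len by simp
    finally show "g ! i = g' ! i" .
  qed
  thus ?thesis using sm sm' by simp
qed

theorem mainTheorem19:
  fixes n m :: nat
  assumes "0 < m"
  shows "card {B :: nat set. is_divisor B {0..n} \<and> finite B \<and> card B = m}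
       = card {cs :: nat list. is_composition (n + 1) cs \<and> headstrong cs \<and> length cs = m}"
proof -
  let ?D = "{B :: nat set. is_divisor B {0..n} \<and> finite B \<and> card B = m}"
  let ?S = "{cs :: nat list. is_composition (n + 1) cs \<and> headstrong cs \<and> length cs = m}"
  have Sform: "cs \<in> ?S \<longleftrightarrow> (\<exists>h g. cs = h # g \<and> 0 < h \<and> (\<forall>x\<in>set g. 0 < x) \<and> (\<forall>x\<in>set g. x \<le> h)
        \<and> h + sum_list g = n + 1 \<and> length g = m - 1)" for cs
  proof
    assume "cs \<in> ?S"
    then obtain h g where "cs = h # g" unfolding headstrong_def by (cases cs) auto
    then show "\<exists>h g. cs = h # g \<and> 0 < h \<and> (\<forall>x\<in>set g. 0 < x) \<and> (\<forall>x\<in>set g. x \<le> h)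
        \<and> h + sum_list g = n + 1 \<and> length g = m - 1"
      using \<open>cs \<in> ?S\<close> hs_iff unfolding is_composition_def by auto
  next
    assume "\<exists>h g. cs = h # g \<and> 0 < h \<and> (\<forall>x\<in>set g. 0 < x) \<and> (\<forall>x\<in>set g. x \<le> h)
        \<and> h + sum_list g = n + 1 \<and> length g = m - 1"
    then show "cs \<in> ?S" using hs_iff assms unfolding is_composition_def by auto
  qed
  have "bij_betw FF ?S ?D"
  proof (rule bij_betw_imageI)
    show "inj_on FF ?S"
    proof (rule inj_onI)
      fix x y assume "x \<in> ?S" "y \<in> ?S" "FF x = FF y"
      then show "x = y" using Sform inj_FF by (smt (verit))
    qed
    show "FF ` ?S = ?D"
    proof
      show "FF ` ?S \<subseteq> ?D"
      proof
        fix B assume "B \<in> FF ` ?S"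
        then obtain cs where "cs \<in> ?S" "B = FF cs" by blast
        then obtain h g where "cs = h # g" "0 < h" "\<forall>x\<in>set g. 0 < x" "\<forall>x\<in>set g. x \<le> h"
          "h + sum_list g = n + 1" "length g = m - 1" using Sform by blast
        then show "B \<in> ?D" using fwd[of g h n] \<open>B = FF cs\<close> assms by auto
      qed
    next
      show "?D \<subseteq> FF ` ?S"
      proof
        fix B assume "B \<in> ?D"
        then obtain C where "sumset B C = {0..n}" "finite B" "card B = m"
          unfolding is_divisor_def by auto
        then obtain h g where hg: "(\<forall>x\<in>set g. 0<x)" "(\<forall>x\<in>set g. x \<le> h)" "h + sum_list g = n+1" "0 < h"
           "length g = m - 1" "FF (h#g) = B" using bwd assms by blast
        hence "h # g \<in> ?S" using Sform by blast
        thus "B \<in> FF ` ?S" using hg(6) by force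
      qed
    qed
  qed
  thus ?thesis by (simp add: bij_betw_same_card)
qed

end
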